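(* Let $\mathcal{H}=\mathbb{C}^3$, written in block form $\mathbb{C}\oplus\mathbb{C}^2$. Let $Q=\{\pm I,\pm i\sigma_1,\pm i\sigma_2,\pm i\sigma_3\}\subset M_2(\mathbb{C})$ be the quaternion group and define the unitary representation $U(g)=\begin{pmatrix}1&0\\0&g\end{pmatrix}$, $g\in Q$, on $\mathbb{C}^3$. Fix $\lambda>0$ and let $T=\begin{pmatrix}2\lambda&0\\0&-\lambda I_{2}\end{pmatrix}$. Let $$M=\tfrac18 I+\alpha_1\begin{pmatrix}0&0\\0&\sigma_1\end{pmatrix}+\alpha_2\begin{pmatrix}0&0\\0&\sigma_2\end{pmatrix}+\alpha_3\begin{pmatrix}0&0\\0&\sigma_3\end{pmatrix}+\begin{pmatrix}0&\bar v^t\\ v&0\end{pmatrix},$$ where $\alpha_1,\alpha_2,\alpha_3\in\mathbb{R}$ and $v\in\mathbb{C}^2$ (a column vector, $\bar v^t$ its conjugate transpose) satisfy $\alpha_1\neq0$, $\alpha_2\neq0$, $\alpha_3\neq0$, $v\neq0$, and $M\geq 0$. Then the map $\mathsf{M}(g)=U(g)MU(g)^*$, $g\in Q$, is a $U$-covariant observable on $Q$, and the linear span of $\{\mathsf{M}(g):g\in Q\}$ equals the Hilbert–Schmidt orthogonal complement $T^\perp=\{L\in M_3(\mathbb{C}):\mathrm{tr}(TL)=0\}$. Hence $\mathsf{M}$ is a pure-state informationally complete observable with $8$ outcomes, the minimal number of outcomes of a pure-state informationally complete observable on $\mathbb{C}^3$.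
   Context: $\sigma_1,\sigma_2,\sigma_3$ are the Pauli matrices and $I$ the identity matrix. An observable with finite outcome set $\Omega$ is a map $\mathsf{M}$ from $\Omega$ to positive operators on $\mathcal{H}$ with $\sum_{x\in\Omega}\mathsf{M}(x)=I$. It is pure-state informationally complete (PIC) if for any two different pure states (rank-one projections) $\varrho_1\neq\varrho_2$ there is $x\in\Omega$ with $\mathrm{tr}(\varrho_1\mathsf{M}(x))\neq\mathrm{tr}(\varrho_2\mathsf{M}(x))$. An observable $\mathsf{M}$ on $\Omega=Q$ is $U$-covariant if $U(g)\mathsf{M}(x)U(g)^*=\mathsf{M}(gx)$ for all $g,x\in Q$. The space of $3\times3$ matrices carries the Hilbert–Schmidt inner product $\langle L_1,L_2\rangle=\mathrm{tr}(L_1^*L_2)$. *)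

theory Defs
  imports "Jordan_Normal_Form.Matrix"
begin

definition mtrace :: "complex mat \<Rightarrow> complex" where
  "mtrace A = (\<Sum>i<dim_row A. A $$ (i,i))"

definition adj :: "complex mat \<Rightarrow> complex mat" where
  "adj A = mat (dim_col A) (dim_row A) (\<lambda>(i,j). cnj (A $$ (j,i)))"

definition positive_op :: "nat \<Rightarrow> complex mat \<Rightarrow> bool" where
  "positive_op n A \<longleftrightarrow> A \<in> carrier_mat n n \<and>
     (\<forall>x \<in> carrier_vec n.
        let z = (\<Sum>i<n. cnj (x $ i) * (A *\<^sub>v x) $ i) in Im z = 0 \<and> 0 \<le> Re z)"

definition observable :: "nat \<Rightarrow> 'a set \<Rightarrow> ('a \<Rightarrow> complex mat) \<Rightarrow> bool" where
  "observable n \<Omega> Mo \<longleftrightarrow> finite \<Omega> \<and> (\<forall>x\<in>\<Omega>. positive_op n (Mo x)) \<and>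
     mat n n (\<lambda>(i,j). \<Sum>x\<in>\<Omega>. Mo x $$ (i,j)) = 1\<^sub>m n"

definition pure_state :: "nat \<Rightarrow> complex mat \<Rightarrow> bool" where
  "pure_state n \<rho> \<longleftrightarrow> (\<exists>v \<in> carrier_vec n. (\<Sum>i<n. (cmod (v $ i))\<^sup>2) = 1 \<and>
      \<rho> = mat n n (\<lambda>(i,j). v $ i * cnj (v $ j)))"

definition PIC :: "nat \<Rightarrow> 'a set \<Rightarrow> ('a \<Rightarrow> complex mat) \<Rightarrow> bool" where
  "PIC n \<Omega> Mo \<longleftrightarrow> (\<forall>\<rho>1 \<rho>2. pure_state n \<rho>1 \<and> pure_state n \<rho>2 \<and> \<rho>1 \<noteq> \<rho>2 \<longrightarrow>
      (\<exists>x\<in>\<Omega>. mtrace (\<rho>1 * Mo x) \<noteq> mtrace (\<rho>2 * Mo x)))"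

definition sigma1 :: "complex mat" where "sigma1 = mat_of_rows_list 2 [[0,1],[1,0]]"
definition sigma2 :: "complex mat" where "sigma2 = mat_of_rows_list 2 [[0,-\<i>],[\<i>,0]]"
definition sigma3 :: "complex mat" where "sigma3 = mat_of_rows_list 2 [[1,0],[0,-1]]"

definition quaternion_group :: "complex mat set" where
  "quaternion_group = {s \<cdot>\<^sub>m g | s g. s \<in> {1, -1} \<and>
      g \<in> {1\<^sub>m 2, \<i> \<cdot>\<^sub>m sigma1, \<i> \<cdot>\<^sub>m sigma2, \<i> \<cdot>\<^sub>m sigma3}}"

(* block embedding of a 2x2 matrix into C (+) C^2: diag(0, A) *)
definition blk0 :: "complex mat \<Rightarrow> complex mat" where
  "blk0 A = mat 3 3 (\<lambda>(i,j). if i = 0 \<or> j = 0 then 0 else A $$ (i - 1, j - 1))"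

definition Urep :: "complex mat \<Rightarrow> complex mat" where
  "Urep g = mat 3 3 (\<lambda>(i,j). if i = 0 \<and> j = 0 then 1
                             else if i = 0 \<or> j = 0 then 0 else g $$ (i - 1, j - 1))"

definition offdiag :: "complex vec \<Rightarrow> complex mat" where
  "offdiag v = mat 3 3 (\<lambda>(i,j). if i = 0 \<and> j \<noteq> 0 then cnj (v $ (j - 1))
                               else if j = 0 \<and> i \<noteq> 0 then v $ (i - 1) else 0)"

definition Tmat :: "real \<Rightarrow> complex mat" where
  "Tmat lam = mat 3 3 (\<lambda>(i,j). if i \<noteq> j then 0 else if i = 0 then complex_of_real (2 * lam)
                               else complex_of_real (- lam))"

definition Mseed :: "real \<Rightarrow> real \<Rightarrow> real \<Rightarrow> complex vec \<Rightarrow> complex mat" where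
  "Mseed a1 a2 a3 v = (1/8) \<cdot>\<^sub>m 1\<^sub>m 3 + complex_of_real a1 \<cdot>\<^sub>m blk0 sigma1
      + complex_of_real a2 \<cdot>\<^sub>m blk0 sigma2 + complex_of_real a3 \<cdot>\<^sub>m blk0 sigma3 + offdiag v"

end

theory Submission
  imports Defs "HOL-Analysis.Linear_Algebra"
begin


lemma sum3: "(\<Sum>i<3. (f::nat\<Rightarrow>_) i) = f 0 + f 1 + (f 2 :: 'b::comm_monoid_add)"
  by (simp add: eval_nat_numeral)
lemma sum3': "(\<Sum>i\<in>{0..<3}. (f::nat\<Rightarrow>_) i) = f 0 + f 1 + (f 2 :: 'b::comm_monoid_add)"
  by (simp add: eval_nat_numeral)
lemma sum2': "(\<Sum>i\<in>{0..<2}. (f::nat\<Rightarrow>_) i) = f 0 + (f 1 :: 'b::comm_monoid_add)"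
  by (simp add: eval_nat_numeral)

lemma less3: "(i::nat) < 3 \<longleftrightarrow> i = 0 \<or> i = 1 \<or> i = 2" by auto

lemma mat3_eqI:
  assumes "A \<in> carrier_mat 3 3" "B \<in> carrier_mat 3 3"
  "A $$ (0,0) = B $$ (0,0)" "A $$ (0,1) = B $$ (0,1)" "A $$ (0,2) = B $$ (0,2)"
  "A $$ (1,0) = B $$ (1,0)" "A $$ (1,1) = B $$ (1,1)" "A $$ (1,2) = B $$ (1,2)"
  "A $$ (2,0) = B $$ (2,0)" "A $$ (2,1) = B $$ (2,1)" "A $$ (2,2) = B $$ (2,2)"
  shows "A = B"
  apply (rule eq_matI) using assms by (auto simp: less3)

definition OM :: "complex \<Rightarrow> complex \<Rightarrow> complex \<Rightarrow> real \<Rightarrow> real \<Rightarrow> real \<Rightarrow> complex mat" where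
 "OM w p0 p1 b1 b2 b3 = mat 3 3 (\<lambda>(i,j).
   if i = 0 then (if j = 0 then w else if j = 1 then cnj p0 else cnj p1)
   else if i = 1 then (if j = 0 then p0 else if j = 1 then w + b3 else b1 - \<i> * b2)
   else (if j = 0 then p1 else if j = 1 then b1 + \<i> * b2 else w - b3))"

lemma Urep_carrier[simp]: "Urep g \<in> carrier_mat 3 3" by (simp add: Urep_def)
lemma adj_carrier[simp]: "A \<in> carrier_mat n n \<Longrightarrow> adj A \<in> carrier_mat n n" by (auto simp: adj_def)
lemma Mseed_carrier[simp]: "Mseed a1 a2 a3 v \<in> carrier_mat 3 3" by (simp add: Mseed_def blk0_def offdiag_def)

lemma Mseed_eq: "Mseed a1 a2 a3 v = OM (1/8) (v$0) (v$1) a1 a2 a3"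
  apply (rule mat3_eqI)
  by (simp_all add: Mseed_def OM_def blk0_def offdiag_def sigma1_def sigma2_def sigma3_def mat_of_rows_list_def)


lemma OM_carrier[simp]: "OM w p0 p1 b1 b2 b3 \<in> carrier_mat 3 3" by (simp add: OM_def)


lemma Obs0: assumes "cnj s = s" "s * s = 1"
  shows "Urep (s \<cdot>\<^sub>m 1\<^sub>m 2) * Mseed a1 a2 a3 v * adj (Urep (s \<cdot>\<^sub>m 1\<^sub>m 2)) = OM (1/8) (s*v$0) (s*v$1) a1 a2 a3"
proof -
  have ss: "s * (s * x) = x" for x by (metis assms(2) mult.assoc mult_1)
  show ?thesis
  apply (rule mat3_eqI, simp_all add: Mseed_eq)
  apply (rule mult_carrier_mat[of _ 3 3 _ 3], rule mult_carrier_mat[of _ 3 3], auto simp: OM_def)[1]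
  apply (simp_all add: OM_def Urep_def adj_def scalar_prod_def sum3' row_def col_def
     sigma1_def sigma2_def sigma3_def mat_of_rows_list_def assms)
  done
qed

lemma Obs1: assumes "cnj s = s" "s * s = 1"
  shows "Urep (s \<cdot>\<^sub>m (\<i> \<cdot>\<^sub>m sigma1)) * Mseed a1 a2 a3 v * adj (Urep (s \<cdot>\<^sub>m (\<i> \<cdot>\<^sub>m sigma1))) = OM (1/8) (s*\<i>*v$1) (s*\<i>*v$0) a1 (-a2) (-a3)"
proof -
  have ss: "s * (s * x) = x" for x by (metis assms(2) mult.assoc mult_1)
  show ?thesis
  apply (rule mat3_eqI, simp_all add: Mseed_eq)
  apply (rule mult_carrier_mat[of _ 3 3 _ 3], rule mult_carrier_mat[of _ 3 3], auto simp: OM_def)[1]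
  apply (simp_all add: OM_def Urep_def adj_def scalar_prod_def sum3' row_def col_def
     sigma1_def sigma2_def sigma3_def mat_of_rows_list_def assms algebra_simps ss)
  done
qed

lemma Obs2: assumes "cnj s = s" "s * s = 1"
  shows "Urep (s \<cdot>\<^sub>m (\<i> \<cdot>\<^sub>m sigma2)) * Mseed a1 a2 a3 v * adj (Urep (s \<cdot>\<^sub>m (\<i> \<cdot>\<^sub>m sigma2))) = OM (1/8) (s*v$1) (-s*v$0) (-a1) a2 (-a3)"
proof -
  have ss: "s * (s * x) = x" for x by (metis assms(2) mult.assoc mult_1)
  show ?thesis
  apply (rule mat3_eqI, simp_all add: Mseed_eq)
  apply (rule mult_carrier_mat[of _ 3 3 _ 3], rule mult_carrier_mat[of _ 3 3], auto simp: OM_def)[1]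
  apply (simp_all add: OM_def Urep_def adj_def scalar_prod_def sum3' row_def col_def
     sigma1_def sigma2_def sigma3_def mat_of_rows_list_def assms algebra_simps ss)
  done
qed

lemma Obs3: assumes "cnj s = s" "s * s = 1"
  shows "Urep (s \<cdot>\<^sub>m (\<i> \<cdot>\<^sub>m sigma3)) * Mseed a1 a2 a3 v * adj (Urep (s \<cdot>\<^sub>m (\<i> \<cdot>\<^sub>m sigma3))) = OM (1/8) (s*\<i>*v$0) (-s*\<i>*v$1) (-a1) (-a2) a3"
proof -
  have ss: "s * (s * x) = x" for x by (metis assms(2) mult.assoc mult_1)
  show ?thesis
  apply (rule mat3_eqI, simp_all add: Mseed_eq)
  apply (rule mult_carrier_mat[of _ 3 3 _ 3], rule mult_carrier_mat[of _ 3 3], auto simp: OM_def)[1]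
  apply (simp_all add: OM_def Urep_def adj_def scalar_prod_def sum3' row_def col_def
     sigma1_def sigma2_def sigma3_def mat_of_rows_list_def assms algebra_simps ss)
  done
qed


lemma mult_in_carrier: "A * B \<in> carrier_mat n m \<longleftrightarrow> dim_row A = n \<and> dim_col B = m"
  unfolding carrier_mat_def by simp
lemma adj_dims[simp]: "dim_row (adj A) = dim_col A" "dim_col (adj A) = dim_row A"
  by (simp_all add: adj_def)

lemma adj_mult_vec_carrier[simp]: "A \<in> carrier_mat n n \<Longrightarrow> adj A *\<^sub>v x \<in> carrier_vec n"
  unfolding carrier_vec_def carrier_mat_def adj_def by simp

lemma adj_mult: assumes "A \<in> carrier_mat n k" "B \<in> carrier_mat k m"
  shows "adj (A * B) = adj B * adj A"
  apply (rule eq_matI)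
  using assms by (auto simp: adj_def scalar_prod_def row_def col_def cnj_sum intro: sum.cong)

lemma quad_form_conj:
  fixes A B :: "complex mat"
  assumes A: "A \<in> carrier_mat n n" and B: "B \<in> carrier_mat n n" and x: "x \<in> carrier_vec n"
  shows "(\<Sum>i<n. cnj (x $ i) * ((A * B * adj A) *\<^sub>v x) $ i)
       = (\<Sum>i<n. cnj ((adj A *\<^sub>v x) $ i) * (B *\<^sub>v (adj A *\<^sub>v x)) $ i)"
proof -
  define y where "y = adj A *\<^sub>v x"
  define z where "z = B *\<^sub>v y"
  have yc: "y \<in> carrier_vec n" using A x by (simp add: y_def)
  have zc: "z \<in> carrier_vec n" using B yc by (simp add: z_def)
  have eq: "(A * B * adj A) *\<^sub>v x = A *\<^sub>v z"
    using A B x by (simp add: z_def y_def assoc_mult_mat_vec[of _ n n _ n])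
  have yl: "cnj (y $ l) = (\<Sum>i<n. A $$ (i,l) * cnj (x $ i))" if "l < n" for l
    using that A x by (simp add: y_def adj_def scalar_prod_def row_def cnj_sum lessThan_atLeast0 mult.commute)
  have "(\<Sum>i<n. cnj (x $ i) * (A *\<^sub>v z) $ i) = (\<Sum>i<n. \<Sum>l<n. cnj (x $ i) * A $$ (i,l) * z $ l)"
    using A zc by (simp add: scalar_prod_def row_def sum_distrib_left lessThan_atLeast0 mult.assoc)
  also have "\<dots> = (\<Sum>l<n. \<Sum>i<n. cnj (x $ i) * A $$ (i,l) * z $ l)" by (rule sum.swap)
  also have "\<dots> = (\<Sum>l<n. cnj (y $ l) * z $ l)"
    by (rule sum.cong, simp, simp add: yl sum_distrib_right sum_distrib_left mult_ac)
  finally show ?thesis by (simp add: eq y_def z_def)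
qed

lemma positive_conj: assumes "positive_op n B" "A \<in> carrier_mat n n"
  shows "positive_op n (A * B * adj A)"
proof -
  have B: "B \<in> carrier_mat n n" using assms(1) by (simp add: positive_op_def)
  show ?thesis unfolding positive_op_def
  proof (intro conjI ballI)
    show "A * B * adj A \<in> carrier_mat n n" using B assms(2) by (auto simp: mult_in_carrier)
    fix x :: "complex vec" assume x: "x \<in> carrier_vec n"
    have yc: "adj A *\<^sub>v x \<in> carrier_vec n" using assms(2) x by simp
    show "let z = \<Sum>i<n. cnj (x $ i) * (A * B * adj A *\<^sub>v x) $ i in Im z = 0 \<and> 0 \<le> Re z"
      using assms(1) yc unfolding positive_op_def quad_form_conj[OF assms(2) B x] by auto
  qed
qed

lemma Urep_mult: assumes "g \<in> carrier_mat 2 2" "x \<in> carrier_mat 2 2"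
  shows "Urep g * Urep x = Urep (g * x)"
  apply (rule mat3_eqI) using assms
  by (simp_all add: Urep_def scalar_prod_def sum3' sum2' row_def col_def mult_in_carrier)


definition Qs :: "complex mat list" where
 "Qs = [1 \<cdot>\<^sub>m 1\<^sub>m 2, (-1) \<cdot>\<^sub>m 1\<^sub>m 2, 1 \<cdot>\<^sub>m (\<i> \<cdot>\<^sub>m sigma1), (-1) \<cdot>\<^sub>m (\<i> \<cdot>\<^sub>m sigma1),
        1 \<cdot>\<^sub>m (\<i> \<cdot>\<^sub>m sigma2), (-1) \<cdot>\<^sub>m (\<i> \<cdot>\<^sub>m sigma2), 1 \<cdot>\<^sub>m (\<i> \<cdot>\<^sub>m sigma3), (-1) \<cdot>\<^sub>m (\<i> \<cdot>\<^sub>m sigma3)]"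

lemma Q_set: "quaternion_group = set Qs"
  unfolding quaternion_group_def Qs_def by auto

lemma Qs_distinct: "distinct Qs"
proof -
  have "distinct (map (\<lambda>A. (A $$ (0,0), A $$ (0,1))) Qs)"
    by (simp add: Qs_def sigma1_def sigma2_def sigma3_def mat_of_rows_list_def complex_eq_iff)
  thus ?thesis by (simp add: distinct_map)
qed

lemma card_Q: "card quaternion_group = 8"
  using Qs_distinct by (simp add: Q_set distinct_card Qs_def)

lemma sum_Q: "(\<Sum>g\<in>quaternion_group. f g) = sum_list (map f Qs)"
  using Qs_distinct by (simp add: Q_set sum_list_distinct_conv_sum_set)

lemma Q_carrier: "g \<in> quaternion_group \<Longrightarrow> g \<in> carrier_mat 2 2"
  by (auto simp: Q_set Qs_def sigma1_def sigma2_def sigma3_def mat_of_rows_list_def)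

lemmas ObsL = Obs0[of 1, simplified] Obs0[of "-1", simplified]
  Obs1[of 1, simplified] Obs1[of "-1", simplified]
  Obs2[of 1, simplified] Obs2[of "-1", simplified]
  Obs3[of 1, simplified] Obs3[of "-1", simplified]

lemma Obs_sum: "mat 3 3 (\<lambda>(i,j). \<Sum>g\<in>quaternion_group. (Urep g * Mseed a1 a2 a3 v * adj (Urep g)) $$ (i,j)) = 1\<^sub>m 3"
  apply (rule mat3_eqI)
  by (simp_all add: sum_Q Qs_def ObsL OM_def)


lemma mtrace_T: "L \<in> carrier_mat 3 3 \<Longrightarrow>
  mtrace (Tmat lam * L) = complex_of_real lam * (2 * L $$ (0,0) - L $$ (1,1) - L $$ (2,2))"
  by (simp add: mtrace_def Tmat_def sum3 scalar_prod_def sum3' row_def col_def algebra_simps)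

lemma span_sub:
  fixes c :: "complex mat \<Rightarrow> complex"
  shows "mat 3 3 (\<lambda>(i,j). \<Sum>g\<in>quaternion_group. c g * (Urep g * Mseed a1 a2 a3 v * adj (Urep g)) $$ (i,j))
     \<in> {L \<in> carrier_mat 3 3. mtrace (Tmat lam * L) = 0}"
  by (simp add: mtrace_T sum_Q Qs_def ObsL OM_def algebra_simps)

definition uu :: "real \<Rightarrow> real \<Rightarrow> real \<Rightarrow> complex mat \<Rightarrow> nat \<Rightarrow> complex" where
 "uu a1 a2 a3 L k = (if k = 1 then (L$$(1,2) + L$$(2,1))/2 / a1
    else if k = 2 then (L$$(2,1) - L$$(1,2))/(2*\<i>) / a2 else (L$$(1,1) - L$$(2,2))/2 / a3)"

definition dd :: "real \<Rightarrow> real \<Rightarrow> real \<Rightarrow> complex mat \<Rightarrow> nat \<Rightarrow> complex" where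
 "dd a1 a2 a3 L h = 2 * L$$(0,0) + (let u1 = uu a1 a2 a3 L 1; u2 = uu a1 a2 a3 L 2; u3 = uu a1 a2 a3 L 3 in
    if h = 0 then (u1 + u2 + u3)/4 else if h = 1 then (u1 - u2 - u3)/4
    else if h = 2 then (- u1 + u2 - u3)/4 else (- u1 - u2 + u3)/4)"

definition pq :: "complex vec \<Rightarrow> complex mat \<Rightarrow> nat \<Rightarrow> complex" where
 "pq v L k = (let N = v$0 * cnj (v$0) + v$1 * cnj (v$1);
    c1 = L$$(1,0); c2 = L$$(2,0); r1 = L$$(0,1); r2 = L$$(0,2) in
    if k = 0 then (c1 * cnj (v$0) + r2 * v$1)/N else if k = 1 then (c1 * cnj (v$1) - r2 * v$0)/N
    else if k = 2 then (r1 * v$0 + c2 * cnj (v$1))/N else (r1 * v$1 - c2 * cnj (v$0))/N)"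

definition ee :: "complex vec \<Rightarrow> complex mat \<Rightarrow> nat \<Rightarrow> complex" where
 "ee v L h = (if h = 0 then (pq v L 0 + pq v L 2)/2 else if h = 3 then (pq v L 0 - pq v L 2)/(2*\<i>)
    else if h = 2 then (pq v L 1 + pq v L 3)/2 else (pq v L 1 - pq v L 3)/(2*\<i>))"

definition coef :: "real \<Rightarrow> real \<Rightarrow> real \<Rightarrow> complex vec \<Rightarrow> complex mat \<Rightarrow> complex mat \<Rightarrow> complex" where
 "coef a1 a2 a3 v L g =
   (if g = Qs!0 then (dd a1 a2 a3 L 0 + ee v L 0)/2 else if g = Qs!1 then (dd a1 a2 a3 L 0 - ee v L 0)/2
   else if g = Qs!2 then (dd a1 a2 a3 L 1 + ee v L 1)/2 else if g = Qs!3 then (dd a1 a2 a3 L 1 - ee v L 1)/2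
   else if g = Qs!4 then (dd a1 a2 a3 L 2 + ee v L 2)/2 else if g = Qs!5 then (dd a1 a2 a3 L 2 - ee v L 2)/2
   else if g = Qs!6 then (dd a1 a2 a3 L 3 + ee v L 3)/2 else (dd a1 a2 a3 L 3 - ee v L 3)/2)"

lemma Qs_neq: "i < 8 \<Longrightarrow> j < 8 \<Longrightarrow> i \<noteq> j \<Longrightarrow> Qs ! i \<noteq> Qs ! j"
  using Qs_distinct by (simp add: nth_eq_iff_index_eq Qs_def)

lemma sum_Q_nth: "(\<Sum>g\<in>quaternion_group. f g) = f (Qs!0) + f (Qs!1) + f (Qs!2) + f (Qs!3) + f (Qs!4) + f (Qs!5) + f (Qs!6) + (f (Qs!7) :: 'b::comm_monoid_add)"
  by (simp add: sum_Q Qs_def add.assoc)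

lemma coef_nth:
  "coef a1 a2 a3 v L (Qs!0) = (dd a1 a2 a3 L 0 + ee v L 0)/2"
  "coef a1 a2 a3 v L (Qs!1) = (dd a1 a2 a3 L 0 - ee v L 0)/2"
  "coef a1 a2 a3 v L (Qs!2) = (dd a1 a2 a3 L 1 + ee v L 1)/2"
  "coef a1 a2 a3 v L (Qs!3) = (dd a1 a2 a3 L 1 - ee v L 1)/2"
  "coef a1 a2 a3 v L (Qs!4) = (dd a1 a2 a3 L 2 + ee v L 2)/2"
  "coef a1 a2 a3 v L (Qs!5) = (dd a1 a2 a3 L 2 - ee v L 2)/2"
  "coef a1 a2 a3 v L (Qs!6) = (dd a1 a2 a3 L 3 + ee v L 3)/2"
  "coef a1 a2 a3 v L (Qs!7) = (dd a1 a2 a3 L 3 - ee v L 3)/2"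
  unfolding coef_def using Qs_neq by simp_all

lemma Obs_nth:
  "Urep (Qs!0) * Mseed a1 a2 a3 v * adj (Urep (Qs!0)) = OM (1/8) (v$0) (v$1) a1 a2 a3"
  "Urep (Qs!1) * Mseed a1 a2 a3 v * adj (Urep (Qs!1)) = OM (1/8) (-v$0) (-v$1) a1 a2 a3"
  "Urep (Qs!2) * Mseed a1 a2 a3 v * adj (Urep (Qs!2)) = OM (1/8) (\<i>*v$1) (\<i>*v$0) a1 (-a2) (-a3)"
  "Urep (Qs!3) * Mseed a1 a2 a3 v * adj (Urep (Qs!3)) = OM (1/8) (-\<i>*v$1) (-\<i>*v$0) a1 (-a2) (-a3)"
  "Urep (Qs!4) * Mseed a1 a2 a3 v * adj (Urep (Qs!4)) = OM (1/8) (v$1) (-v$0) (-a1) a2 (-a3)"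
  "Urep (Qs!5) * Mseed a1 a2 a3 v * adj (Urep (Qs!5)) = OM (1/8) (-v$1) (v$0) (-a1) a2 (-a3)"
  "Urep (Qs!6) * Mseed a1 a2 a3 v * adj (Urep (Qs!6)) = OM (1/8) (\<i>*v$0) (-\<i>*v$1) (-a1) (-a2) a3"
  "Urep (Qs!7) * Mseed a1 a2 a3 v * adj (Urep (Qs!7)) = OM (1/8) (-\<i>*v$0) (\<i>*v$1) (-a1) (-a2) a3"
  by (simp_all add: Qs_def ObsL)

lemma pq_simps:
  "pq v L 0 = (L$$(1,0) * cnj (v$0) + L$$(0,2) * v$1)/(v$0 * cnj (v$0) + v$1 * cnj (v$1))"
  "pq v L 1 = (L$$(1,0) * cnj (v$1) - L$$(0,2) * v$0)/(v$0 * cnj (v$0) + v$1 * cnj (v$1))"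
  "pq v L 2 = (L$$(0,1) * v$0 + L$$(2,0) * cnj (v$1))/(v$0 * cnj (v$0) + v$1 * cnj (v$1))"
  "pq v L 3 = (L$$(0,1) * v$1 - L$$(2,0) * cnj (v$0))/(v$0 * cnj (v$0) + v$1 * cnj (v$1))"
  by (simp_all add: pq_def)

lemma divhelp1: "(n::complex) \<noteq> 0 \<Longrightarrow> x*a + y*b = c*n \<Longrightarrow> x/n*a + y/n*b = c"
  by (simp add: field_simps)
lemma divhelp2: "(n::complex) \<noteq> 0 \<Longrightarrow> x*a - y*b = c*n \<Longrightarrow> x/n*a - y/n*b = c"
  by (simp add: field_simps)

lemma span_sup:
  assumes lam: "lam > 0" and a: "a1 \<noteq> 0" "a2 \<noteq> 0" "a3 \<noteq> 0"
    and N: "v$0 * cnj (v$0) + v$1 * cnj (v$1) \<noteq> 0"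
    and L: "L \<in> carrier_mat 3 3" and tr: "mtrace (Tmat lam * L) = 0"
  shows "L = mat 3 3 (\<lambda>(i,j). \<Sum>g\<in>quaternion_group. coef a1 a2 a3 v L g * (Urep g * Mseed a1 a2 a3 v * adj (Urep g)) $$ (i,j))"
proof -
  have "complex_of_real lam * (2 * L$$(0,0) - L$$(1,1) - L$$(2,2)) = 0"
    using tr by (simp only: mtrace_T[OF L])
  hence "2 * L$$(0,0) - L$$(1,1) - L$$(2,2) = 0" using lam by simp
  hence t: "2 * L$$(0,0) = L$$(Suc 0,Suc 0) + L$$(2,2)" by (simp add: algebra_simps)
  let ?d = "dd a1 a2 a3 L" and ?e = "ee v L" and ?p = "pq v L"
  have D0: "?d 0 + ?d (Suc 0) + ?d 2 + ?d 3 = 8 * L$$(0,0)"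
    by (simp add: dd_def Let_def field_simps)
  have D1: "2 * complex_of_real a1 * (?d 0 + ?d (Suc 0) - ?d 2 - ?d 3) = L$$(Suc 0,2) + L$$(2,Suc 0)"
    using a by (simp add: dd_def Let_def uu_def field_simps)
  have D2: "2 * \<i> * complex_of_real a2 * (?d 0 - ?d (Suc 0) + ?d 2 - ?d 3) = L$$(2,Suc 0) - L$$(Suc 0,2)"
    using a by (simp add: dd_def Let_def uu_def field_simps)
  have D3: "2 * complex_of_real a3 * (?d 0 - ?d (Suc 0) - ?d 2 + ?d 3) = L$$(Suc 0,Suc 0) - L$$(2,2)"
    using a by (simp add: dd_def Let_def uu_def field_simps)
  have P1: "?e 0 + \<i> * ?e 3 = ?p 0" and P2: "?e 0 - \<i> * ?e 3 = ?p 2"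
   and P3: "?e 2 + \<i> * ?e (Suc 0) = ?p (Suc 0)" and P4: "?e 2 - \<i> * ?e (Suc 0) = ?p 3"
    by (simp_all add: ee_def field_simps)
  have Q1: "?p 0 * v$0 + ?p (Suc 0) * v $ Suc 0 = L$$(Suc 0,0)"
    unfolding One_nat_def[symmetric] pq_simps using N by (rule divhelp1 divhelp2) (simp add: algebra_simps)
  have Q2: "?p 2 * v $ Suc 0 - ?p 3 * v$0 = L$$(2,0)"
    unfolding One_nat_def[symmetric] pq_simps using N by (rule divhelp1 divhelp2) (simp add: algebra_simps)
  have Q3: "?p 2 * cnj (v$0) + ?p 3 * cnj (v $ Suc 0) = L$$(0,Suc 0)"
    unfolding One_nat_def[symmetric] pq_simps using N by (rule divhelp1 divhelp2) (simp add: algebra_simps)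
  have Q4: "?p 0 * cnj (v $ Suc 0) - ?p (Suc 0) * cnj (v$0) = L$$(0,2)"
    unfolding One_nat_def[symmetric] pq_simps using N by (rule divhelp1 divhelp2) (simp add: algebra_simps)
  have t0: "L$$(0,0) = (L$$(Suc 0,Suc 0) + L$$(2,2))/2" using t by (simp add: field_simps mult.commute)
  have N': "v$0 * cnj (v$0) + v $ Suc 0 * cnj (v $ Suc 0) \<noteq> 0" using N by simp
  have ii: "\<i> * \<i> = -1" by simp
  show ?thesis
    apply (rule mat3_eqI[OF L])
    apply (simp_all only: sum_Q_nth coef_nth Obs_nth)
    apply (simp_all add: OM_def)
    subgoal by (simp add: field_simps, simp add: dd_def uu_def Let_def t0, simp add: field_simps a)
    subgoal by (simp add: field_simps, simp add: ee_def, simp add: field_simps Q1[symmetric] Q2[symmetric] Q3[symmetric] Q4[symmetric])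
    subgoal by (simp add: field_simps, simp add: ee_def, simp add: field_simps Q1[symmetric] Q2[symmetric] Q3[symmetric] Q4[symmetric])
    subgoal by (simp add: field_simps, simp add: ee_def, simp add: field_simps Q1[symmetric] Q2[symmetric] Q3[symmetric] Q4[symmetric])
    subgoal by (simp add: field_simps, simp add: dd_def uu_def Let_def t0, simp add: field_simps a)
    subgoal by (simp add: field_simps, simp add: dd_def uu_def Let_def t0, simp add: field_simps a)
    subgoal by (simp add: field_simps, simp add: ee_def, simp add: field_simps Q1[symmetric] Q2[symmetric] Q3[symmetric] Q4[symmetric])
    subgoal by (simp add: field_simps, simp add: dd_def uu_def Let_def t0, simp add: field_simps a)
    subgoal by (simp add: field_simps, simp add: dd_def uu_def Let_def t0, simp add: field_simps a)
    done
qed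


lemma mtrace_mult3: "A \<in> carrier_mat 3 3 \<Longrightarrow> B \<in> carrier_mat 3 3 \<Longrightarrow>
   mtrace (A * B) = (\<Sum>i<3. \<Sum>k<3. A $$ (i,k) * B $$ (k,i))"
  by (simp add: mtrace_def scalar_prod_def row_def col_def lessThan_atLeast0)

lemma mtrace_lin:
  assumes A: "A \<in> carrier_mat 3 3" and fin: "finite S" and Ob: "\<And>g. g \<in> S \<Longrightarrow> Ob g \<in> carrier_mat 3 3"
  shows "mtrace (A * mat 3 3 (\<lambda>(i,j). \<Sum>g\<in>S. c g * Ob g $$ (i,j))) = (\<Sum>g\<in>S. c g * mtrace (A * Ob g))"
proof -
  have "mtrace (A * mat 3 3 (\<lambda>(i,j). \<Sum>g\<in>S. c g * Ob g $$ (i,j)))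
      = (\<Sum>i<3. \<Sum>k<3. \<Sum>g\<in>S. A $$ (i,k) * (c g * Ob g $$ (k,i)))"
    using A by (simp add: mtrace_mult3 sum_distrib_left)
  also have "\<dots> = (\<Sum>g\<in>S. \<Sum>i<3. \<Sum>k<3. A $$ (i,k) * (c g * Ob g $$ (k,i)))"
    by (simp add: sum.swap[of _ S] sum.swap[of _ S "{..<3}"])
  also have "\<dots> = (\<Sum>g\<in>S. c g * mtrace (A * Ob g))"
    using A Ob by (auto simp: mtrace_mult3 sum_distrib_left mult_ac intro!: sum.cong)
  finally show ?thesis .
qed

definition Emat :: "nat \<Rightarrow> nat \<Rightarrow> complex mat" where
  "Emat i j = mat 3 3 (\<lambda>(a,b). if a = i \<and> b = j then 1 else 0)"

lemma mtrace_Emat: "A \<in> carrier_mat 3 3 \<Longrightarrow> i < 3 \<Longrightarrow> j < 3 \<Longrightarrow> mtrace (A * Emat i j) = A $$ (j,i)"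
  by (simp add: mtrace_mult3 Emat_def sum3 less3, auto)

lemma Emat_carrier[simp]: "Emat i j \<in> carrier_mat 3 3" by (simp add: Emat_def)

lemma Emat_perp: "i \<noteq> j \<Longrightarrow> Emat i j \<in> {L \<in> carrier_mat 3 3. mtrace (Tmat lam * L) = 0}"
  using mtrace_T[OF Emat_carrier, of lam i j] by (auto simp: Emat_def)

lemma Dmat_carrier: "Emat 1 1 - Emat 2 2 \<in> carrier_mat 3 3" by (rule minus_carrier_mat, simp)

lemma Dmat_perp: "Emat 1 1 - Emat 2 2 \<in> {L \<in> carrier_mat 3 3. mtrace (Tmat lam * L) = 0}"
  using mtrace_T[OF Dmat_carrier, of lam] Dmat_carrier by (simp add: Emat_def)


lemma pure_stateE:
  assumes "pure_state 3 \<rho>"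
  obtains v where "v \<in> carrier_vec 3" "cmod (v$0)^2 + cmod (v$1)^2 + cmod (v$2)^2 = 1"
    "\<rho> = mat 3 3 (\<lambda>(i,j). v $ i * cnj (v $ j))"
  using assms unfolding pure_state_def by (auto simp: sum3)

lemma cnj_sq: "z * cnj z = complex_of_real (cmod z ^ 2)"
  by (metis complex_norm_square)

lemma pure_eq:
  assumes p1: "pure_state 3 \<rho>1" and p2: "pure_state 3 \<rho>2"
    and off: "\<And>i j. i < 3 \<Longrightarrow> j < 3 \<Longrightarrow> i \<noteq> j \<Longrightarrow> \<rho>1 $$ (i,j) = \<rho>2 $$ (i,j)"
    and dg: "\<rho>1 $$ (1,1) - \<rho>1 $$ (2,2) = \<rho>2 $$ (1,1) - \<rho>2 $$ (2,2)"
  shows "\<rho>1 = \<rho>2"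
proof -
  obtain v where v: "v \<in> carrier_vec 3" "cmod (v$0)^2 + cmod (v$1)^2 + cmod (v$2)^2 = 1"
    and r1: "\<rho>1 = mat 3 3 (\<lambda>(i,j). v $ i * cnj (v $ j))" using p1 by (rule pure_stateE)
  obtain w where w: "w \<in> carrier_vec 3" "cmod (w$0)^2 + cmod (w$1)^2 + cmod (w$2)^2 = 1"
    and r2: "\<rho>2 = mat 3 3 (\<lambda>(i,j). w $ i * cnj (w $ j))" using p2 by (rule pure_stateE)
  define x0 where "x0 = cmod (v$0)^2"
  define x1 where "x1 = cmod (v$1)^2"
  define x2 where "x2 = cmod (v$2)^2"
  define y0 where "y0 = cmod (w$0)^2"
  define y1 where "y1 = cmod (w$1)^2"
  define y2 where "y2 = cmod (w$2)^2"
  note xd = x0_def x1_def x2_def y0_def y1_def y2_def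
  have nn: "x1 \<ge> 0" "x2 \<ge> 0" "y1 \<ge> 0" "y2 \<ge> 0" by (simp_all add: xd)
  have s: "x0 + x1 + x2 = y0 + y1 + y2" using v w by (simp add: xd)
  have "complex_of_real x1 - complex_of_real x2 = complex_of_real y1 - complex_of_real y2"
    using dg by (simp add: r1 r2 cnj_sq xd)
  hence d: "x1 - x2 = y1 - y2" by (metis of_real_diff of_real_eq_iff)
  have "v$1 * cnj (v$2) = w$1 * cnj (w$2)" using off[of 1 2] by (simp add: r1 r2)
  hence "cmod (v$1) * cmod (v$2) = cmod (w$1) * cmod (w$2)"
    by (metis complex_mod_cnj norm_mult)
  hence pr: "x1 * x2 = y1 * y2" unfolding xd by (simp add: power_mult_distrib[symmetric])
  have e1: "x1 = y1"
  proof (rule ccontr)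
    assume "x1 \<noteq> y1"
    then consider "x1 > y1" | "x1 < y1" by linarith
    thus False
    proof cases
      case 1
      hence "x2 > y2" using d by linarith
      hence "y1 * y2 < x1 * x2" using 1 nn by (intro mult_strict_mono) auto
      thus False using pr by simp
    next
      case 2
      hence "x2 < y2" using d by linarith
      hence "x1 * x2 < y1 * y2" using 2 nn by (intro mult_strict_mono) auto
      thus False using pr by simp
    qed
  qed
  have e2: "x2 = y2" using e1 d by simp
  have e0: "x0 = y0" using e1 e2 s by simp
  show ?thesis
  proof (rule eq_matI)
    fix i j assume ij: "i < dim_row \<rho>2" "j < dim_col \<rho>2"
    hence ij3: "i < 3" "j < 3" by (auto simp: r2)
    show "\<rho>1 $$ (i,j) = \<rho>2 $$ (i,j)"
    proof (cases "i = j")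
      case True
      then show ?thesis using ij3 e0 e1 e2 by (auto simp: r1 r2 cnj_sq xd less3)
    next
      case False
      then show ?thesis using off ij3 by auto
    qed
  qed (auto simp: r1 r2)
qed

lemma PIC_from_perp:
  fixes Ob :: "complex mat \<Rightarrow> complex mat"
  assumes span: "\<And>L. L \<in> {L \<in> carrier_mat 3 3. mtrace (Tmat lam * L) = 0} \<Longrightarrow>
      \<exists>c. L = mat 3 3 (\<lambda>(i,j). \<Sum>g\<in>S. c g * Ob g $$ (i,j))"
    and Obc: "\<And>g. g \<in> S \<Longrightarrow> Ob g \<in> carrier_mat 3 3" and fin: "finite S"
  shows "PIC 3 S Ob"
  unfolding PIC_def
proof (intro allI impI)
  fix \<rho>1 \<rho>2 assume H: "pure_state 3 \<rho>1 \<and> pure_state 3 \<rho>2 \<and> \<rho>1 \<noteq> \<rho>2"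
  have c1: "\<rho>1 \<in> carrier_mat 3 3" using H by (auto simp: pure_state_def)
  have c2: "\<rho>2 \<in> carrier_mat 3 3" using H by (auto simp: pure_state_def)
  show "\<exists>x\<in>S. mtrace (\<rho>1 * Ob x) \<noteq> mtrace (\<rho>2 * Ob x)"
  proof (rule ccontr)
    assume "\<not> ?thesis"
    hence eq: "\<And>x. x \<in> S \<Longrightarrow> mtrace (\<rho>1 * Ob x) = mtrace (\<rho>2 * Ob x)" by auto
    have key: "mtrace (\<rho>1 * L) = mtrace (\<rho>2 * L)" if L: "L \<in> {L \<in> carrier_mat 3 3. mtrace (Tmat lam * L) = 0}" for L
    proof -
      obtain c where Lc: "L = mat 3 3 (\<lambda>(i,j). \<Sum>g\<in>S. c g * Ob g $$ (i,j))" using span[OF L] by blast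
      have "mtrace (\<rho>1 * L) = (\<Sum>g\<in>S. c g * mtrace (\<rho>1 * Ob g))"
        unfolding Lc by (rule mtrace_lin[OF c1 fin Obc])
      moreover have "mtrace (\<rho>2 * L) = (\<Sum>g\<in>S. c g * mtrace (\<rho>2 * Ob g))"
        unfolding Lc by (rule mtrace_lin[OF c2 fin Obc])
      ultimately show ?thesis using eq by (auto intro: sum.cong)
    qed
    have off: "\<rho>1 $$ (i,j) = \<rho>2 $$ (i,j)" if "i < 3" "j < 3" "i \<noteq> j" for i j
      using key[OF Emat_perp[of j i]] that mtrace_Emat[OF c1, of j i] mtrace_Emat[OF c2, of j i] by auto
    have "mtrace (\<rho>1 * (Emat 1 1 - Emat 2 2)) = mtrace (\<rho>2 * (Emat 1 1 - Emat 2 2))"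
      by (rule key[OF Dmat_perp])
    hence dg: "\<rho>1 $$ (1,1) - \<rho>1 $$ (2,2) = \<rho>2 $$ (1,1) - \<rho>2 $$ (2,2)"
      using c1 c2 Dmat_carrier by (simp add: mtrace_mult3 sum3 Emat_def)
    have "\<rho>1 = \<rho>2" using pure_eq[of \<rho>1 \<rho>2] H off dg by blast
    thus False using H by simp
  qed
qed


lemma conj_assoc3:
  assumes "A \<in> carrier_mat 3 3" "B \<in> carrier_mat 3 3" "C \<in> carrier_mat 3 3"
  shows "A * (B * C * adj B) * adj A = (A * B) * C * (adj B * adj A)"
proof -
  have [simp]: "adj A \<in> carrier_mat 3 3" "adj B \<in> carrier_mat 3 3" using assms by auto
  show ?thesis using assms
    by (simp add: assoc_mult_mat[of _ 3 3 _ 3 _ 3] mult_carrier_mat[of _ 3 3 _ 3])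
qed



definition Hm :: "((real \<times> real \<times> real) \<times> (real \<times> real \<times> real) \<times> (real \<times> real \<times> real)) \<Rightarrow> complex mat" where
  "Hm x = (let a0 = fst (fst x); a1 = fst (snd (fst x)); a2 = snd (snd (fst x));
     b0 = fst (fst (snd x)); b1 = fst (snd (fst (snd x))); b2 = snd (snd (fst (snd x)));
     c0 = fst (snd (snd x)); c1 = fst (snd (snd (snd x))); c2 = snd (snd (snd (snd x)))
    in mat 3 3 (\<lambda>(i,j). if i = 0 \<and> j = 0 then complex_of_real a0
      else if i = 1 \<and> j = 1 then complex_of_real a1 else if i = 2 \<and> j = 2 then complex_of_real a2
      else if i = 0 \<and> j = 1 then complex_of_real b0 + \<i> * complex_of_real c0
      else if i = 1 \<and> j = 0 then complex_of_real b0 - \<i> * complex_of_real c0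
      else if i = 0 \<and> j = 2 then complex_of_real b1 + \<i> * complex_of_real c1
      else if i = 2 \<and> j = 0 then complex_of_real b1 - \<i> * complex_of_real c1
      else if i = 1 \<and> j = 2 then complex_of_real b2 + \<i> * complex_of_real c2
      else complex_of_real b2 - \<i> * complex_of_real c2))"

lemma Hm_carrier[simp]: "Hm x \<in> carrier_mat 3 3" by (simp add: Hm_def Let_def)

lemma Hm_add: "Hm (x + y) = Hm x + Hm y"
  by (rule mat3_eqI) (auto simp: Hm_def Let_def algebra_simps)

lemma Hm_scale: "Hm (r *\<^sub>R x) = complex_of_real r \<cdot>\<^sub>m Hm x"
  by (rule mat3_eqI) (auto simp: Hm_def Let_def algebra_simps)

lemma mtrace_add_left: "A \<in> carrier_mat 3 3 \<Longrightarrow> B \<in> carrier_mat 3 3 \<Longrightarrow> C \<in> carrier_mat 3 3 \<Longrightarrow>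
  mtrace ((A + B) * C) = mtrace (A * C) + mtrace (B * C)"
  by (simp add: mtrace_def sum3 scalar_prod_def sum3' row_def col_def algebra_simps)

lemma mtrace_smult_left: "A \<in> carrier_mat 3 3 \<Longrightarrow> C \<in> carrier_mat 3 3 \<Longrightarrow>
  mtrace ((r \<cdot>\<^sub>m A) * C) = r * mtrace (A * C)"
  by (simp add: mtrace_def sum3 scalar_prod_def sum3' row_def col_def algebra_simps)

lemma linear_g: assumes "C \<in> carrier_mat 3 3"
  shows "linear (\<lambda>x. Re (mtrace (Hm x * C)))"
  by (rule linearI) (simp_all add: Hm_add Hm_scale mtrace_add_left mtrace_smult_left assms)


definition det3 :: "complex mat \<Rightarrow> complex" where
  "det3 X = X$$(0,0) * X$$(1,1) * X$$(2,2) + X$$(0,1) * X$$(1,2) * X$$(2,0) + X$$(0,2) * X$$(1,0) * X$$(2,1)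
     - X$$(0,2) * X$$(1,1) * X$$(2,0) - X$$(0,1) * X$$(1,0) * X$$(2,2) - X$$(0,0) * X$$(1,2) * X$$(2,1)"

definition cc :: "complex mat \<Rightarrow> complex" where
  "cc X = -(X$$(0,0) * X$$(1,1) + X$$(0,0) * X$$(2,2) + X$$(1,1) * X$$(2,2)
     - X$$(0,1) * X$$(1,0) - X$$(0,2) * X$$(2,0) - X$$(1,2) * X$$(2,1))"

lemma CH3:
  assumes A: "A \<in> carrier_mat 3 3" and tr: "A$$(0,0) + A$$(1,1) + A$$(2,2) = 0"
  shows "A * A * A = cc A \<cdot>\<^sub>m A + det3 A \<cdot>\<^sub>m 1\<^sub>m 3"
proof -
  have t: "A$$(2,2) = - A$$(0,0) - A$$(1,1)" using tr by (simp add: algebra_simps add_eq_0_iff)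
  show ?thesis
    apply (rule mat3_eqI)
    using A apply (simp_all add: mult_carrier_mat[of _ 3 3 _ 3])
    using A by (simp_all add: scalar_prod_def sum3' row_def col_def cc_def det3_def t algebra_simps)
qed

definition pdet :: "((real \<times> real \<times> real) \<times> (real \<times> real \<times> real) \<times> (real \<times> real \<times> real)) \<Rightarrow> real" where
  "pdet x = (let a0 = fst (fst x); a1 = fst (snd (fst x)); a2 = snd (snd (fst x));
     b0 = fst (fst (snd x)); b1 = fst (snd (fst (snd x))); b2 = snd (snd (fst (snd x)));
     c0 = fst (snd (snd x)); c1 = fst (snd (snd (snd x))); c2 = snd (snd (snd (snd x)))
    in a0*a1*a2 + 2*((b0*b2 - c0*c2)*b1 + (b0*c2 + c0*b2)*c1) - a1*(b1^2+c1^2) - a2*(b0^2+c0^2) - a0*(b2^2+c2^2))"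

definition s2 :: "((real \<times> real \<times> real) \<times> (real \<times> real \<times> real) \<times> (real \<times> real \<times> real)) \<Rightarrow> real" where
  "s2 x = (let a0 = fst (fst x); a1 = fst (snd (fst x)); a2 = snd (snd (fst x));
     b0 = fst (fst (snd x)); b1 = fst (snd (fst (snd x))); b2 = snd (snd (fst (snd x)));
     c0 = fst (snd (snd x)); c1 = fst (snd (snd (snd x))); c2 = snd (snd (snd (snd x)))
    in (a0^2 + a1^2 + a2^2)/2 + b0^2 + b1^2 + b2^2 + c0^2 + c1^2 + c2^2)"

definition htr :: "((real \<times> real \<times> real) \<times> (real \<times> real \<times> real) \<times> (real \<times> real \<times> real)) \<Rightarrow> real" where
  "htr x = fst (fst x) + fst (snd (fst x)) + snd (snd (fst x))"

lemma det3_Hm: "det3 (Hm x) = complex_of_real (pdet x)"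
  by (simp add: det3_def Hm_def pdet_def Let_def complex_eq_iff algebra_simps power2_eq_square)

lemma cc_Hm: assumes "htr x = 0" shows "cc (Hm x) = complex_of_real (s2 x)"
proof -
  have t: "snd (snd (fst x)) = - fst (fst x) - fst (snd (fst x))" using assms by (simp add: htr_def)
  show ?thesis
    by (simp add: cc_def Hm_def s2_def Let_def t complex_eq_iff algebra_simps power2_eq_square)
qed

lemma pdet_neg: "pdet (- x) = - pdet x"
  by (simp add: pdet_def Let_def algebra_simps)

lemma s2_ge: "s2 x \<ge> inner x x / 2"
proof -
  have "s2 x - inner x x / 2 = ((fst (fst (snd x)))^2 + (fst (snd (fst (snd x))))^2 + (snd (snd (fst (snd x))))^2
     + (fst (snd (snd x)))^2 + (fst (snd (snd (snd x))))^2 + (snd (snd (snd (snd x))))^2)/2"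
    by (simp add: s2_def Let_def inner_prod_def power2_eq_square field_simps)
  moreover have "0 \<le> ((fst (fst (snd x)))^2 + (fst (snd (fst (snd x))))^2 + (snd (snd (fst (snd x))))^2
     + (fst (snd (snd x)))^2 + (fst (snd (snd (snd x))))^2 + (snd (snd (snd (snd x))))^2)/2" by simp
  ultimately show ?thesis by linarith
qed

lemma s2_pos: "x \<noteq> 0 \<Longrightarrow> s2 x > 0"
  using s2_ge[of x] inner_gt_zero_iff[of x] by linarith

lemma Hm_nonzero: assumes "x \<noteq> 0" shows "Hm x \<noteq> 0\<^sub>m 3 3"
proof
  assume h: "Hm x = 0\<^sub>m 3 3"
  have e: "Hm x $$ (i,j) = 0" if "i < 3" "j < 3" for i j using h that by simp
  have "x = 0"
    using e[of 0 0] e[of 1 1] e[of 2 2] e[of 0 1] e[of 0 2] e[of 1 2]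
    by (simp add: Hm_def Let_def complex_eq_iff prod_eq_iff)
  thus False using assms by simp
qed


lemma smult_smult_mat: "k \<cdot>\<^sub>m (l \<cdot>\<^sub>m A) = (k * l) \<cdot>\<^sub>m (A :: 'a::comm_ring_1 mat)"
  by (rule eq_matI) auto

lemma proj_idem:
  fixes A :: "complex mat"
  assumes A: "A \<in> carrier_mat n n" and h: "A * A * A = s \<cdot>\<^sub>m A" and as: "a * a = s" and s0: "s \<noteq> 0"
  shows "((1/(2*s)) \<cdot>\<^sub>m (A * A + a \<cdot>\<^sub>m A)) * ((1/(2*s)) \<cdot>\<^sub>m (A * A + a \<cdot>\<^sub>m A))
       = (1/(2*s)) \<cdot>\<^sub>m (A * A + a \<cdot>\<^sub>m A)"
proof -
  define B where "B = A * A"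
  define r where "r = 1/(2*s)"
  have Bc: "B \<in> carrier_mat n n" using A by (simp add: B_def)
  have aAc: "a \<cdot>\<^sub>m A \<in> carrier_mat n n" using A by simp
  have BA: "B * A = s \<cdot>\<^sub>m A" using h by (simp add: B_def)
  have "A * B = A * A * A" unfolding B_def by (rule assoc_mult_mat[OF A A A, symmetric])
  hence AB: "A * B = s \<cdot>\<^sub>m A" using h by simp
  have BB: "B * B = s \<cdot>\<^sub>m B"
  proof -
    have "B * B = (B * A) * A" unfolding B_def using A by (simp add: assoc_mult_mat[of _ n n _ n _ n])
    also have "\<dots> = (s \<cdot>\<^sub>m A) * A" by (simp only: BA)
    also have "\<dots> = s \<cdot>\<^sub>m B" using A by (simp add: mult_smult_assoc_mat[of _ n n] B_def)
    finally show ?thesis .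
  qed
  have Sc: "B + a \<cdot>\<^sub>m A \<in> carrier_mat n n" using Bc aAc by simp
  have sq: "(B + a \<cdot>\<^sub>m A) * (B + a \<cdot>\<^sub>m A) = (2*s) \<cdot>\<^sub>m (B + a \<cdot>\<^sub>m A)"
  proof -
    have "(B + a \<cdot>\<^sub>m A) * (B + a \<cdot>\<^sub>m A) = B * B + (a \<cdot>\<^sub>m A) * B + (B * (a \<cdot>\<^sub>m A) + (a \<cdot>\<^sub>m A) * (a \<cdot>\<^sub>m A))"
      using Bc aAc Sc by (simp add: add_mult_distrib_mat[of _ n n _ _ n] mult_add_distrib_mat[of _ n n _ n])
    also have "\<dots> = s \<cdot>\<^sub>m B + (a * s) \<cdot>\<^sub>m A + ((a * s) \<cdot>\<^sub>m A + (a * a) \<cdot>\<^sub>m B)"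
      using A Bc by (simp add: BB mult_smult_distrib[of _ n n] mult_smult_assoc_mat[of _ n n] AB BA smult_smult_mat B_def[symmetric] mult.commute)
    also have "\<dots> = (2*s) \<cdot>\<^sub>m (B + a \<cdot>\<^sub>m A)"
      using A Bc unfolding as by (intro eq_matI) (auto simp: algebra_simps)
    finally show ?thesis .
  qed
  have "(r \<cdot>\<^sub>m (B + a \<cdot>\<^sub>m A)) * (r \<cdot>\<^sub>m (B + a \<cdot>\<^sub>m A)) = (r * r * (2*s)) \<cdot>\<^sub>m (B + a \<cdot>\<^sub>m A)"
    using Sc by (simp add: mult_smult_distrib[of _ n n] mult_smult_assoc_mat[of _ n n] sq smult_smult_mat mult_ac)
  also have "r * r * (2*s) = r" using s0 by (simp add: r_def field_simps)
  finally show ?thesis by (simp add: r_def B_def)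
qed


definition herm3 :: "complex mat \<Rightarrow> bool" where
  "herm3 A \<longleftrightarrow> A \<in> carrier_mat 3 3 \<and> (\<forall>i<3. \<forall>j<3. A$$(j,i) = cnj (A$$(i,j)))"

lemma sum3_zero_nonneg: "(a::real) \<ge> 0 \<Longrightarrow> b \<ge> 0 \<Longrightarrow> c \<ge> 0 \<Longrightarrow> a + b + c = 0 \<Longrightarrow> a = 0 \<and> b = 0 \<and> c = 0"
  by linarith

lemma pure_of_proj:
  assumes H: "herm3 P" and idem: "P * P = P" and tr: "mtrace P = 1"
  shows "pure_state 3 P"
proof -
  have Pc: "P \<in> carrier_mat 3 3" and hm: "\<And>i j. i < 3 \<Longrightarrow> j < 3 \<Longrightarrow> P$$(j,i) = cnj (P$$(i,j))"
    using H unfolding herm3_def by blast+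
  have id: "(\<Sum>k<3. P$$(i,k) * P$$(k,l)) = P$$(i,l)" if "i < 3" "l < 3" for i l
  proof -
    have "(P * P) $$ (i,l) = P $$ (i,l)" using idem by simp
    thus ?thesis using Pc that by (simp add: scalar_prod_def row_def col_def lessThan_atLeast0)
  qed
  define d where "d j = (\<Sum>k<3. (cmod (P$$(j,k)))^2)" for j
  have dnn: "d j \<ge> 0" for j by (simp add: d_def sum_nonneg)
  have diag: "P$$(j,j) = complex_of_real (d j)" if "j < 3" for j
  proof -
    have "P$$(j,j) = (\<Sum>k<3. P$$(j,k) * P$$(k,j))" using id[OF that that] by simp
    also have "\<dots> = (\<Sum>k<3. P$$(j,k) * cnj (P$$(j,k)))"
    proof (rule sum.cong)
      fix k assume "k \<in> {..<3::nat}"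
      thus "P$$(j,k) * P$$(k,j) = P$$(j,k) * cnj (P$$(j,k))" using hm[of j k] that by simp
    qed simp
    also have "\<dots> = complex_of_real (d j)" by (simp add: d_def cnj_sq)
    finally show ?thesis .
  qed
  have "complex_of_real (d 0 + d 1 + d 2) = 1"
    using tr Pc by (simp add: mtrace_def sum3 diag)
  hence dsum: "d 0 + d 1 + d 2 = 1" by (metis of_real_1 of_real_eq_iff)
  obtain j where j: "j < 3" "d j > 0"
  proof -
    have "\<exists>j<3. d j > 0"
    proof (rule ccontr)
      assume "\<not> ?thesis"
      hence "\<not> 0 < d 0" "\<not> 0 < d 1" "\<not> 0 < d 2" by (auto simp del: not_less)
      thus False using dsum by linarith
    qed
    thus ?thesis using that by blast
  qed
  define p where "p = d j"
  have p0: "p > 0" using j by (simp add: p_def)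
  have Pjj: "P$$(j,j) = complex_of_real p" using diag[OF j(1)] by (simp add: p_def)
  define Q where "Q i k = P$$(i,k) - P$$(i,j) * P$$(j,k) / complex_of_real p" for i k
  have pc0: "complex_of_real p \<noteq> 0" using p0 by simp
  have Qh: "Q k i = cnj (Q i k)" if "i < 3" "k < 3" for i k
    using that j(1) hm[of i k] hm[of i j] hm[of j k] by (simp add: Q_def)
  have Qid: "(\<Sum>k<3. Q i k * Q k l) = Q i l" if "i < 3" "l < 3" for i l
  proof -
    have "(\<Sum>k<3. Q i k * Q k l) = (\<Sum>k<3. P$$(i,k) * P$$(k,l)) - P$$(j,l) / p * (\<Sum>k<3. P$$(i,k) * P$$(k,j))
        - P$$(i,j) / p * (\<Sum>k<3. P$$(j,k) * P$$(k,l)) + P$$(i,j) * P$$(j,l) / (p*p) * (\<Sum>k<3. P$$(j,k) * P$$(k,j))"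
      using pc0 by (simp add: sum3 Q_def field_simps)
    also have "\<dots> = Q i l"
      using pc0 by (simp only: id[OF that] id[OF that(1) j(1)] id[OF j(1) that(2)] id[OF j(1) j(1)] Pjj)
        (simp add: Q_def field_simps)
    finally show ?thesis .
  qed
  have trQ: "Q 0 0 + Q 1 1 + Q 2 2 = 0"
  proof -
    have "Q 0 0 + Q 1 1 + Q 2 2 = (P$$(0,0) + P$$(1,1) + P$$(2,2)) - (\<Sum>i<3. P$$(j,i) * P$$(i,j)) / p"
      by (simp add: Q_def sum3 add_divide_distrib algebra_simps)
    also have "\<dots> = 0" using tr Pc pc0 by (simp only: id[OF j(1) j(1)] Pjj) (simp add: mtrace_def sum3)
    finally show ?thesis .
  qed
  define q where "q i = (\<Sum>k<3. (cmod (Q i k))^2)" for i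
  have qQ: "Q i i = complex_of_real (q i)" if "i < 3" for i
  proof -
    have "Q i i = (\<Sum>k<3. Q i k * Q k i)" using Qid[OF that that] by simp
    also have "\<dots> = (\<Sum>k<3. Q i k * cnj (Q i k))"
    proof (rule sum.cong)
      fix k assume "k \<in> {..<3::nat}"
      thus "Q i k * Q k i = Q i k * cnj (Q i k)" using Qh[of i k] that by simp
    qed simp
    also have "\<dots> = complex_of_real (q i)" by (simp add: q_def cnj_sq)
    finally show ?thesis .
  qed
  have "complex_of_real (q 0 + q 1 + q 2) = 0" using trQ by (simp add: qQ)
  hence "q 0 + q 1 + q 2 = 0" by (simp only: of_real_eq_0_iff)
  hence "q 0 = 0 \<and> q 1 = 0 \<and> q 2 = 0" by (intro sum3_zero_nonneg) (simp_all add: q_def sum_nonneg)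
  hence qz: "q i = 0" if "i < 3" for i using that by (auto simp: less3)
  have Qz: "Q i k = 0" if "i < 3" "k < 3" for i k
  proof -
    have "(\<Sum>k<3. (cmod (Q i k))^2) = 0" using qz[OF that(1)] by (simp add: q_def)
    hence "\<forall>k\<in>{..<3}. (cmod (Q i k))^2 = 0" by (subst sum_nonneg_eq_0_iff[symmetric]) auto
    thus ?thesis using that by simp
  qed
  define u where "u = vec 3 (\<lambda>i. P$$(i,j) / complex_of_real (sqrt p))"
  have sq0: "sqrt p * sqrt p = p" using p0 by simp
  have sq: "complex_of_real (sqrt p) * complex_of_real (sqrt p) = complex_of_real p"
    by (simp only: of_real_mult[symmetric] sq0)
  have sqc: "cnj (complex_of_real (sqrt p)) = complex_of_real (sqrt p)" by simp
  show ?thesis unfolding pure_state_def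
  proof (intro bexI conjI)
    show "u \<in> carrier_vec 3" by (simp add: u_def)
    have "(\<Sum>i<3. (cmod (u $ i))\<^sup>2) = (\<Sum>i<3. (cmod (P$$(j,i)))^2) / p"
    proof -
      have "(\<Sum>i<3. (cmod (u $ i))\<^sup>2) = (\<Sum>i<3. (cmod (P$$(j,i)))^2 / p)"
      proof (rule sum.cong, simp)
        fix i :: nat assume "i \<in> {..<3}"
        hence i: "i < 3" by simp
        have "cmod (u $ i) = cmod (P$$(j,i)) / sqrt p"
          using i j(1) p0 hm[of j i] by (simp add: u_def norm_divide complex_mod_cnj)
        thus "(cmod (u $ i))\<^sup>2 = (cmod (P$$(j,i)))^2 / p"
          using p0 by (simp add: power_divide)
      qed
      thus ?thesis by (simp add: sum_divide_distrib)
    qed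
    also have "\<dots> = 1" using p0 by (simp add: p_def d_def)
    finally show "(\<Sum>i<3. (cmod (u $ i))\<^sup>2) = 1" .
    show "P = mat 3 3 (\<lambda>(i, k). u $ i * cnj (u $ k))"
    proof (rule eq_matI)
      fix i k assume "i < dim_row (mat 3 3 (\<lambda>(i, k). u $ i * cnj (u $ k)))"
        "k < dim_col (mat 3 3 (\<lambda>(i, k). u $ i * cnj (u $ k)))"
      hence ik: "i < 3" "k < 3" by auto
      have "u $ i * cnj (u $ k) = P$$(i,j) * P$$(j,k) / complex_of_real p"
        using ik j(1) sq hm[of j k] by (simp add: u_def field_simps)
      also have "\<dots> = P$$(i,k)" using Qz[OF ik] by (simp add: Q_def)
      finally show "P $$ (i,k) = mat 3 3 (\<lambda>(i, k). u $ i * cnj (u $ k)) $$ (i,k)"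
        using ik by simp
    qed (use Pc in auto)
  qed
qed



lemma Hm_dims[simp]: "dim_row (Hm x) = 3" "dim_col (Hm x) = 3"
  by (simp_all add: Hm_def Let_def)

lemma herm3_Hm: "herm3 (Hm x)"
  unfolding herm3_def by (auto simp: Hm_def Let_def less3)

lemma herm3_sq: assumes "herm3 A" shows "herm3 (A * A)"
proof -
  have Ac: "A \<in> carrier_mat 3 3" and hm: "\<And>i j. i < 3 \<Longrightarrow> j < 3 \<Longrightarrow> A$$(j,i) = cnj (A$$(i,j))"
    using assms unfolding herm3_def by blast+
  have "(A * A) $$ (j,i) = cnj ((A * A) $$ (i,j))" if ij: "i < 3" "j < 3" for i j
  proof -
    have "(A * A) $$ (j,i) = (\<Sum>k<3. A$$(j,k) * A$$(k,i))"
      using Ac ij by (simp add: scalar_prod_def row_def col_def lessThan_atLeast0)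
    also have "\<dots> = (\<Sum>k<3. cnj (A$$(i,k) * A$$(k,j)))"
    proof (rule sum.cong)
      fix k assume "k \<in> {..<3::nat}"
      thus "A$$(j,k) * A$$(k,i) = cnj (A$$(i,k) * A$$(k,j))" using hm[of k j] hm[of i k] ij by simp
    qed simp
    also have "\<dots> = cnj ((A * A) $$ (i,j))"
      using Ac ij by (simp add: scalar_prod_def row_def col_def lessThan_atLeast0 cnj_sum)
    finally show ?thesis .
  qed
  moreover have "A * A \<in> carrier_mat 3 3" using Ac by (simp add: mult_carrier_mat[of _ 3 3 _ 3])
  ultimately show ?thesis unfolding herm3_def by blast
qed

lemma herm3_comb: assumes "herm3 A" "herm3 B" "cnj c = c" "cnj d = d"
  shows "herm3 (c \<cdot>\<^sub>m (A + d \<cdot>\<^sub>m B))"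
proof -
  have Ac: "A \<in> carrier_mat 3 3" and hA: "\<And>i j. i < 3 \<Longrightarrow> j < 3 \<Longrightarrow> A$$(j,i) = cnj (A$$(i,j))"
    using assms unfolding herm3_def by blast+
  have Bc: "B \<in> carrier_mat 3 3" and hB: "\<And>i j. i < 3 \<Longrightarrow> j < 3 \<Longrightarrow> B$$(j,i) = cnj (B$$(i,j))"
    using assms unfolding herm3_def by blast+
  show ?thesis unfolding herm3_def
  proof (intro conjI allI impI)
    show "c \<cdot>\<^sub>m (A + d \<cdot>\<^sub>m B) \<in> carrier_mat 3 3" using Ac Bc by simp
    fix i j :: nat assume ij: "i < 3" "j < 3"
    show "(c \<cdot>\<^sub>m (A + d \<cdot>\<^sub>m B)) $$ (j,i) = cnj ((c \<cdot>\<^sub>m (A + d \<cdot>\<^sub>m B)) $$ (i,j))"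
      using Ac Bc ij hA[OF ij] hB[OF ij] assms(3,4) by simp
  qed
qed

lemma mtrace_comb: "A \<in> carrier_mat 3 3 \<Longrightarrow> B \<in> carrier_mat 3 3 \<Longrightarrow>
   mtrace (c \<cdot>\<^sub>m (A + d \<cdot>\<^sub>m B)) = c * (mtrace A + d * mtrace B)"
  by (simp add: mtrace_def sum3 algebra_simps)

lemma mtrace_Hm: "mtrace (Hm x) = complex_of_real (htr x)"
  by (simp add: mtrace_def sum3 Hm_def Let_def htr_def)

lemma mtrace_Hm_sq: "htr x = 0 \<Longrightarrow> mtrace (Hm x * Hm x) = complex_of_real (2 * s2 x)"
proof -
  assume "htr x = 0"
  hence t: "snd (snd (fst x)) = - fst (fst x) - fst (snd (fst x))" by (simp add: htr_def)
  show ?thesis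
    by (simp add: mtrace_mult3 sum3 Hm_def s2_def Let_def t complex_eq_iff algebra_simps power2_eq_square)
qed

lemma cube_Hm:
  assumes "htr x = 0" "pdet x = 0"
  shows "Hm x * Hm x * Hm x = complex_of_real (s2 x) \<cdot>\<^sub>m Hm x"
proof -
  have tr: "Hm x $$ (0,0) + Hm x $$ (1,1) + Hm x $$ (2,2) = 0"
    using assms(1) unfolding htr_def by (simp add: Hm_def Let_def flip: of_real_add)
  have "Hm x * Hm x * Hm x = cc (Hm x) \<cdot>\<^sub>m Hm x + det3 (Hm x) \<cdot>\<^sub>m 1\<^sub>m 3"
    by (rule CH3[OF Hm_carrier tr])
  also have "\<dots> = complex_of_real (s2 x) \<cdot>\<^sub>m Hm x"
    using assms by (intro eq_matI) (auto simp: cc_Hm det3_Hm)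
  finally show ?thesis .
qed

lemma core:
  assumes x0: "x \<noteq> 0" and tr: "htr x = 0" and dt: "pdet x = 0"
  shows "\<exists>\<rho>1 \<rho>2 c. pure_state 3 \<rho>1 \<and> pure_state 3 \<rho>2 \<and> \<rho>1 \<noteq> \<rho>2 \<and> \<rho>1 = \<rho>2 + c \<cdot>\<^sub>m Hm x"
proof -
  define X where "X = Hm x"
  define s where "s = s2 x"
  have s0: "s > 0" using s2_pos[OF x0] by (simp add: s_def)
  define a where "a = complex_of_real (sqrt s)"
  define sc where "sc = complex_of_real s"
  have sc0: "sc \<noteq> 0" using s0 by (simp add: sc_def)
  have aa: "a * a = sc" using s0 by (simp add: a_def sc_def flip: of_real_mult)
  have ma: "(-a) * (-a) = sc" using aa by simp
  have Xc: "X \<in> carrier_mat 3 3" by (simp add: X_def)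
  have cube: "X * X * X = sc \<cdot>\<^sub>m X" unfolding X_def sc_def s_def by (rule cube_Hm[OF tr dt])
  define Pp where "Pp = (1/(2*sc)) \<cdot>\<^sub>m (X * X + a \<cdot>\<^sub>m X)"
  define Pm where "Pm = (1/(2*sc)) \<cdot>\<^sub>m (X * X + (-a) \<cdot>\<^sub>m X)"
  have hX: "herm3 X" by (simp add: X_def herm3_Hm)
  have hXX: "herm3 (X * X)" by (rule herm3_sq[OF hX])
  have rr: "cnj (1/(2*sc)) = 1/(2*sc)" by (simp add: sc_def)
  have hPp: "herm3 Pp" unfolding Pp_def by (rule herm3_comb[OF hXX hX rr]) (simp add: a_def)
  have hPm: "herm3 Pm" unfolding Pm_def by (rule herm3_comb[OF hXX hX rr]) (simp add: a_def)
  have iPp: "Pp * Pp = Pp" unfolding Pp_def by (rule proj_idem[OF Xc cube aa sc0])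
  have iPm: "Pm * Pm = Pm" unfolding Pm_def by (rule proj_idem[OF Xc cube ma sc0])
  have trX: "mtrace X = 0" using tr by (simp add: X_def mtrace_Hm)
  have trXX: "mtrace (X * X) = 2 * sc" using tr by (simp add: X_def mtrace_Hm_sq sc_def s_def)
  have XXc: "X * X \<in> carrier_mat 3 3" using Xc by (simp add: mult_carrier_mat[of _ 3 3 _ 3])
  have tPp: "mtrace Pp = 1" unfolding Pp_def using sc0 by (simp add: mtrace_comb[OF XXc Xc] trX trXX)
  have tPm: "mtrace Pm = 1" unfolding Pm_def using sc0 by (simp add: mtrace_comb[OF XXc Xc] trX trXX)
  have diff: "Pp = Pm + (a / sc) \<cdot>\<^sub>m X"
    unfolding Pp_def Pm_def using Xc XXc sc0 by (intro eq_matI) (auto simp: field_simps)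
  have "X \<noteq> 0\<^sub>m 3 3" using Hm_nonzero[OF x0] by (simp add: X_def)
  moreover have "a / sc \<noteq> 0" using s0 sc0 by (simp add: a_def)
  ultimately have ne: "Pp \<noteq> Pm"
  proof -
    assume "X \<noteq> 0\<^sub>m 3 3" "a / sc \<noteq> 0"
    have "\<exists>i<3. \<exists>j<3. X $$ (i,j) \<noteq> 0"
    proof (rule ccontr)
      assume "\<not> ?thesis"
      hence "X = 0\<^sub>m 3 3" using Xc by (intro eq_matI) auto
      thus False using \<open>X \<noteq> 0\<^sub>m 3 3\<close> by simp
    qed
    then obtain i j where ij: "i < 3" "j < 3" "X $$ (i,j) \<noteq> 0" by blast
    have Pmc: "Pm \<in> carrier_mat 3 3" unfolding Pm_def using Xc XXc by simp
    have "Pp $$ (i,j) = Pm $$ (i,j) + (a / sc) * X $$ (i,j)" using diff ij Pmc Xc by simp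
    hence "Pp $$ (i,j) \<noteq> Pm $$ (i,j)" using ij(3) \<open>a / sc \<noteq> 0\<close> by simp
    thus ?thesis by auto
  qed
  show ?thesis
    using pure_of_proj[OF hPp iPp tPp] pure_of_proj[OF hPm iPm tPm] ne diff
    unfolding X_def by blast
qed


lemma pos_quad:
  assumes "positive_op 3 M"
  shows "Im (\<Sum>i<3. cnj (f i) * (\<Sum>k<3. M$$(i,k) * f k)) = 0"
proof -
  have Mc: "M \<in> carrier_mat 3 3" using assms by (simp add: positive_op_def)
  have xc: "vec 3 f \<in> carrier_vec 3" by simp
  have "(\<Sum>i<3. cnj (vec 3 f $ i) * (M *\<^sub>v vec 3 f) $ i) = (\<Sum>i<3. cnj (f i) * (\<Sum>k<3. M$$(i,k) * f k))"
    using Mc by (intro sum.cong) (auto simp: scalar_prod_def row_def lessThan_atLeast0)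
  thus ?thesis using assms xc unfolding positive_op_def Let_def by metis
qed

lemma pos_herm: assumes "positive_op 3 M" shows "herm3 M"
proof -
  have Mc: "M \<in> carrier_mat 3 3" using assms by (simp add: positive_op_def)
  have d: "Im (M$$(i,i)) = 0" if "i < 3" for i
    using pos_quad[OF assms, of "\<lambda>k. if k = i then 1 else 0"] that by (auto simp: sum3 less3)
  have o: "M$$(j,i) = cnj (M$$(i,j))" if "i < 3" "j < 3" "i \<noteq> j" for i j
  proof -
    have h1: "Im (M$$(i,j) + M$$(j,i)) = 0"
      using pos_quad[OF assms, of "\<lambda>k. if k = i \<or> k = j then 1 else 0"] that d[OF that(1)] d[OF that(2)]
      by (auto simp: sum3 less3)
    have h2: "Re (M$$(i,j) - M$$(j,i)) = 0"
      using pos_quad[OF assms, of "\<lambda>k. if k = i then 1 else if k = j then \<i> else 0"] that d[OF that(1)] d[OF that(2)]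
      by (auto simp: sum3 less3 algebra_simps)
    show ?thesis using h1 h2 by (simp add: complex_eq_iff)
  qed
  show ?thesis unfolding herm3_def
  proof (intro conjI allI impI Mc)
    fix i j :: nat assume ij: "i < 3" "j < 3"
    show "M$$(j,i) = cnj (M$$(i,j))"
    proof (cases "i = j")
      case True thus ?thesis using d[OF ij(1)] by (simp add: complex_eq_iff)
    next
      case False thus ?thesis using o ij by blast
    qed
  qed
qed

lemma herm3_facts: assumes "herm3 A"
  shows "A$$(Suc 0,0) = cnj (A$$(0,Suc 0))" "A$$(2,0) = cnj (A$$(0,2))" "A$$(2,Suc 0) = cnj (A$$(Suc 0,2))"
    "cnj (A$$(0,0)) = A$$(0,0)" "cnj (A$$(Suc 0,Suc 0)) = A$$(Suc 0,Suc 0)" "cnj (A$$(2,2)) = A$$(2,2)"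
proof -
  have hm: "\<And>i j. i < 3 \<Longrightarrow> j < 3 \<Longrightarrow> A$$(j,i) = cnj (A$$(i,j))" using assms unfolding herm3_def by blast
  show "A$$(Suc 0,0) = cnj (A$$(0,Suc 0))" by (rule hm) simp_all
  show "A$$(2,0) = cnj (A$$(0,2))" by (rule hm) simp_all
  show "A$$(2,Suc 0) = cnj (A$$(Suc 0,2))" by (rule hm) simp_all
  have "A$$(0,0) = cnj (A$$(0,0))" by (rule hm) simp_all
  thus "cnj (A$$(0,0)) = A$$(0,0)" by (rule sym)
  have "A$$(Suc 0,Suc 0) = cnj (A$$(Suc 0,Suc 0))" by (rule hm) simp_all
  thus "cnj (A$$(Suc 0,Suc 0)) = A$$(Suc 0,Suc 0)" by (rule sym)
  have "A$$(2,2) = cnj (A$$(2,2))" by (rule hm) simp_all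
  thus "cnj (A$$(2,2)) = A$$(2,2)" by (rule sym)
qed

lemma herm_trace_real: assumes "herm3 A" "herm3 B"
  shows "cnj (mtrace (A * B)) = mtrace (A * B)"
proof -
  have Ac: "A \<in> carrier_mat 3 3" and Bc: "B \<in> carrier_mat 3 3" using assms by (auto simp: herm3_def)
  note fa = herm3_facts[OF assms(1)] and fb = herm3_facts[OF assms(2)]
  show ?thesis using Ac Bc
    by (simp add: mtrace_mult3 sum3 fa(1-3) fb(1-3)) (simp add: fa(4-6) fb(4-6) algebra_simps)
qed

lemma trace_from_obs:
  assumes obs: "observable 3 \<Omega> Mo" and X: "X \<in> carrier_mat 3 3"
  shows "(\<Sum>w\<in>\<Omega>. mtrace (X * Mo w)) = mtrace X"
proof -
  have fin: "finite \<Omega>" and Mc: "\<And>w. w \<in> \<Omega> \<Longrightarrow> Mo w \<in> carrier_mat 3 3"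
    and sm: "mat 3 3 (\<lambda>(i,j). \<Sum>x\<in>\<Omega>. Mo x $$ (i,j)) = 1\<^sub>m 3"
    using obs by (auto simp: observable_def positive_op_def)
  have "mtrace (X * mat 3 3 (\<lambda>(i,j). \<Sum>g\<in>\<Omega>. (\<lambda>_. 1) g * Mo g $$ (i,j))) = (\<Sum>g\<in>\<Omega>. (\<lambda>_. 1) g * mtrace (X * Mo g))"
    by (rule mtrace_lin[OF X fin Mc])
  thus ?thesis using sm X by simp
qed


lemma kernel_nonzero:
  fixes f :: "'a::euclidean_space \<Rightarrow> 'b::euclidean_space"
  assumes lf: "linear f" and d: "DIM('b) < DIM('a)"
  shows "\<exists>x. x \<noteq> 0 \<and> f x = 0"
proof (rule ccontr)
  assume "\<not> ?thesis"
  hence "inj f" using lf by (auto simp: linear_inj_iff_eq_0)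
  hence "dim (f ` UNIV) = dim (UNIV :: 'a set)"
    using lf by (intro dim_image_eq) (auto intro: inj_on_subset)
  moreover have "dim (f ` UNIV) \<le> DIM('b)" by (rule dim_subset_UNIV)
  ultimately show False using d by simp
qed

lemma linear_pair: "linear f \<Longrightarrow> linear g \<Longrightarrow> linear (\<lambda>x. (f x, g x))"
  by (rule linearI) (simp_all add: linear_add linear_scale)

lemma linear_inner_l: "linear (\<lambda>x. inner x y)"
  using bounded_linear_inner_left bounded_linear.linear by blast

type_synonym R9 = "(real \<times> real \<times> real) \<times> (real \<times> real \<times> real) \<times> (real \<times> real \<times> real)"

lemma two_kernel:
  fixes g :: "nat \<Rightarrow> R9 \<Rightarrow> real"
  assumes lin: "\<And>k. k < 7 \<Longrightarrow> linear (g k)"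
  shows "\<exists>x1 x2. x1 \<noteq> 0 \<and> x2 \<noteq> 0 \<and> inner x2 x1 = 0 \<and> (\<forall>k<7. g k x1 = 0 \<and> g k x2 = 0)"
proof -
  define f1 where "f1 = (\<lambda>x. (g 0 x, g 1 x, g 2 x, g 3 x, g 4 x, g 5 x, g 6 x))"
  have lf1: "linear f1" unfolding f1_def using lin by (intro linear_pair) auto
  have "DIM(real \<times> real \<times> real \<times> real \<times> real \<times> real \<times> real) < DIM(R9)" by simp
  from kernel_nonzero[OF lf1 this] obtain x1 where x1: "x1 \<noteq> 0" "f1 x1 = 0" by blast
  define f2 where "f2 = (\<lambda>x. (inner x x1, f1 x))"
  have lf2: "linear f2" unfolding f2_def by (intro linear_pair linear_inner_l lf1)
  have "DIM(real \<times> real \<times> real \<times> real \<times> real \<times> real \<times> real \<times> real) < DIM(R9)" by simp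
  from kernel_nonzero[OF lf2 this] obtain x2 where x2: "x2 \<noteq> 0" "f2 x2 = 0" by blast
  have k1: "g k x1 = 0" if "k < 7" for k
    using x1(2) that by (auto simp: f1_def zero_prod_def less_Suc_eq numeral_eq_Suc)
  have k2: "g k x2 = 0" if "k < 7" for k
    using x2(2) that by (auto simp: f1_def f2_def zero_prod_def less_Suc_eq numeral_eq_Suc)
  have "inner x2 x1 = 0" using x2(2) by (simp add: f2_def zero_prod_def)
  thus ?thesis using x1(1) x2(1) k1 k2 by blast
qed

lemma ivt_det:
  fixes x1 x2 :: R9
  assumes "x1 \<noteq> 0" "x2 \<noteq> 0" "inner x2 x1 = 0"
  shows "\<exists>t. pdet (cos t *\<^sub>R x1 + sin t *\<^sub>R x2) = 0 \<and> cos t *\<^sub>R x1 + sin t *\<^sub>R x2 \<noteq> 0"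
proof -
  define \<phi> where "\<phi> t = pdet (cos t *\<^sub>R x1 + sin t *\<^sub>R x2)" for t
  have cont: "continuous_on {0..pi} \<phi>"
    unfolding \<phi>_def pdet_def Let_def by (simp, intro continuous_intros)
  have pi: "\<phi> pi = - \<phi> 0" by (simp add: \<phi>_def pdet_neg)
  have "\<exists>t. 0 \<le> t \<and> t \<le> pi \<and> \<phi> t = 0"
  proof (cases "\<phi> 0 \<le> 0")
    case True
    thus ?thesis using pi cont by (intro IVT') auto
  next
    case False
    thus ?thesis using pi cont by (intro IVT2') auto
  qed
  then obtain t where t: "\<phi> t = 0" by blast
  have nz: "cos t *\<^sub>R x1 + sin t *\<^sub>R x2 \<noteq> 0"
  proof
    assume h: "cos t *\<^sub>R x1 + sin t *\<^sub>R x2 = 0"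
    have "inner (cos t *\<^sub>R x1 + sin t *\<^sub>R x2) x1 = cos t * inner x1 x1"
      using assms(3) by (simp add: inner_add_left)
    hence "cos t * inner x1 x1 = 0" using h by simp
    hence c: "cos t = 0" using assms(1) by simp
    have "inner (cos t *\<^sub>R x1 + sin t *\<^sub>R x2) x2 = sin t * inner x2 x2"
      using assms(3) inner_commute[of x1 x2] by (simp add: inner_add_left)
    hence "sin t * inner x2 x2 = 0" using h by simp
    hence "sin t = 0" using assms(2) by simp
    thus False using c sin_cos_squared_add[of t] by simp
  qed
  show ?thesis using t nz unfolding \<phi>_def by blast
qed


lemma lower_bound:
  fixes \<Omega> :: "'a set"
  assumes obs: "observable 3 \<Omega> Mo" and pic: "PIC 3 \<Omega> Mo"
  shows "8 \<le> card \<Omega>"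
proof (rule ccontr)
  assume "\<not> 8 \<le> card \<Omega>"
  hence c7: "card \<Omega> \<le> 7" by simp
  have fin: "finite \<Omega>" and pos: "\<And>w. w \<in> \<Omega> \<Longrightarrow> positive_op 3 (Mo w)"
    using obs by (auto simp: observable_def)
  have Moc: "\<And>w. w \<in> \<Omega> \<Longrightarrow> Mo w \<in> carrier_mat 3 3" using pos by (simp add: positive_op_def)
  obtain xs where xs: "set xs = \<Omega>" "distinct xs" using finite_distinct_list[OF fin] by blast
  have lxs: "length xs \<le> 7" using c7 xs distinct_card by fastforce
  define e where "e k = (xs @ replicate 7 undefined) ! k" for k
  have cover: "\<exists>k<7. e k = w" if "w \<in> \<Omega>" for w
  proof -
    have "w \<in> set xs" using that xs(1) by simp
    then obtain k where k: "k < length xs" "xs ! k = w" by (auto simp: in_set_conv_nth)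
    hence "e k = w" by (simp add: e_def nth_append)
    thus ?thesis using k lxs by (intro exI[of _ k]) auto
  qed
  define Mc where "Mc k = (if e k \<in> \<Omega> then Mo (e k) else 0\<^sub>m 3 3)" for k
  have Mcc: "Mc k \<in> carrier_mat 3 3" for k by (simp add: Mc_def Moc)
  define g where "g k x = Re (mtrace (Hm x * Mc k))" for k x
  have lg: "linear (g k)" for k unfolding g_def by (rule linear_g[OF Mcc])
  obtain x1 x2 where x12: "x1 \<noteq> 0" "x2 \<noteq> 0" "inner x2 x1 = 0" "\<forall>k<7. g k x1 = 0 \<and> g k x2 = 0"
    using two_kernel[of g] lg by blast
  obtain t where t: "pdet (cos t *\<^sub>R x1 + sin t *\<^sub>R x2) = 0" "cos t *\<^sub>R x1 + sin t *\<^sub>R x2 \<noteq> 0"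
    using ivt_det[OF x12(1-3)] by blast
  define y where "y = cos t *\<^sub>R x1 + sin t *\<^sub>R x2"
  have gy: "g k y = 0" if "k < 7" for k
    using x12(4) that lg[of k] by (simp add: y_def linear_add linear_scale)
  have trw: "mtrace (Hm y * Mo w) = 0" if w: "w \<in> \<Omega>" for w
  proof -
    obtain k where k: "k < 7" "e k = w" using cover[OF w] by blast
    have "Re (mtrace (Hm y * Mo w)) = 0" using gy[OF k(1)] k w by (simp add: g_def Mc_def)
    moreover have "cnj (mtrace (Hm y * Mo w)) = mtrace (Hm y * Mo w)"
      by (rule herm_trace_real[OF herm3_Hm pos_herm[OF pos[OF w]]])
    hence "Im (mtrace (Hm y * Mo w)) = 0" by (metis Reals_cnj_iff complex_is_Real_iff)
    ultimately show ?thesis by (simp add: complex_eq_iff)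
  qed
  have "mtrace (Hm y) = 0"
    using trace_from_obs[OF obs Hm_carrier, of y] trw by simp
  hence htr: "htr y = 0" by (simp add: mtrace_Hm)
  obtain \<rho>1 \<rho>2 c where r: "pure_state 3 \<rho>1" "pure_state 3 \<rho>2" "\<rho>1 \<noteq> \<rho>2" "\<rho>1 = \<rho>2 + c \<cdot>\<^sub>m Hm y"
    using core[OF t(2)[folded y_def] htr t(1)[folded y_def]] by blast
  have r2c: "\<rho>2 \<in> carrier_mat 3 3" using r(2) by (auto simp: pure_state_def)
  have "mtrace (\<rho>1 * Mo w) = mtrace (\<rho>2 * Mo w)" if w: "w \<in> \<Omega>" for w
  proof -
    have "mtrace (\<rho>1 * Mo w) = mtrace (\<rho>2 * Mo w) + c * mtrace (Hm y * Mo w)"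
      unfolding r(4) using r2c Moc[OF w]
      by (simp add: mtrace_add_left[of _ _ "Mo w"] mtrace_smult_left)
    thus ?thesis using trw[OF w] by simp
  qed
  thus False using pic r(1-3) unfolding PIC_def by blast
qed

theorem proposition6:
  fixes lam a1 a2 a3 :: real and v :: "complex vec"
  assumes "lam > 0"
    and "v \<in> carrier_vec 2" and "v \<noteq> 0\<^sub>v 2"
    and "a1 \<noteq> 0" and "a2 \<noteq> 0" and "a3 \<noteq> 0"
    and "positive_op 3 (Mseed a1 a2 a3 v)"
  defines "Obs \<equiv> (\<lambda>g. Urep g * Mseed a1 a2 a3 v * adj (Urep g))"
  shows "observable 3 quaternion_group Obs
    \<and> (\<forall>g\<in>quaternion_group. \<forall>x\<in>quaternion_group.
          Urep g * Obs x * adj (Urep g) = Obs (g * x))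
    \<and> {L. \<exists>c. L = mat 3 3 (\<lambda>(i,j). \<Sum>g\<in>quaternion_group. c g * Obs g $$ (i,j))}
        = {L \<in> carrier_mat 3 3. mtrace (Tmat lam * L) = 0}
    \<and> PIC 3 quaternion_group Obs
    \<and> card quaternion_group = 8
    \<and> (\<forall>(\<Omega> :: 'a set) Mo. observable 3 \<Omega> Mo \<and> PIC 3 \<Omega> Mo \<longrightarrow> 8 \<le> card \<Omega>)"
proof -
  have N: "v$0 * cnj (v$0) + v$1 * cnj (v$1) \<noteq> 0"
  proof
    assume h: "v$0 * cnj (v$0) + v$1 * cnj (v$1) = 0"
    have "complex_of_real (cmod (v$0)^2 + cmod (v$1)^2) = 0" using h by (simp add: cnj_sq)
    hence "cmod (v$0)^2 + cmod (v$1)^2 = 0" by (simp only: of_real_eq_0_iff)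
    hence "v$0 = 0" "v$1 = 0" by (auto simp: add_nonneg_eq_0_iff)
    hence "v = 0\<^sub>v 2" using assms(2) by (auto simp: less_2_cases_iff)
    thus False using assms(3) by simp
  qed
  have fin: "finite quaternion_group" by (simp add: Q_set)
  have Obc: "Obs g \<in> carrier_mat 3 3" for g
    unfolding Obs_def by (simp add: mult_in_carrier Urep_def)
  have C1: "observable 3 quaternion_group Obs"
    unfolding observable_def using fin Obs_sum[of a1 a2 a3 v] assms(7)
    by (auto simp: Obs_def intro: positive_conj)
  have C2: "\<forall>g\<in>quaternion_group. \<forall>x\<in>quaternion_group. Urep g * Obs x * adj (Urep g) = Obs (g * x)"
  proof (intro ballI)
    fix g x assume g: "g \<in> quaternion_group" and x: "x \<in> quaternion_group"
    have gc: "g \<in> carrier_mat 2 2" and xc: "x \<in> carrier_mat 2 2" using g x Q_carrier by auto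
    show "Urep g * Obs x * adj (Urep g) = Obs (g * x)"
      unfolding Obs_def conj_assoc3[OF Urep_carrier Urep_carrier Mseed_carrier]
      by (simp add: Urep_mult[OF gc xc] adj_mult[OF Urep_carrier Urep_carrier, symmetric])
  qed
  have spanI: "\<And>L. L \<in> {L \<in> carrier_mat 3 3. mtrace (Tmat lam * L) = 0} \<Longrightarrow>
      \<exists>c. L = mat 3 3 (\<lambda>(i,j). \<Sum>g\<in>quaternion_group. c g * Obs g $$ (i,j))"
    using span_sup[OF assms(1) assms(4-6) N] unfolding Obs_def by blast
  have C3: "{L. \<exists>c. L = mat 3 3 (\<lambda>(i,j). \<Sum>g\<in>quaternion_group. c g * Obs g $$ (i,j))}
        = {L \<in> carrier_mat 3 3. mtrace (Tmat lam * L) = 0}"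
  proof
    show "{L. \<exists>c. L = mat 3 3 (\<lambda>(i,j). \<Sum>g\<in>quaternion_group. c g * Obs g $$ (i,j))}
        \<subseteq> {L \<in> carrier_mat 3 3. mtrace (Tmat lam * L) = 0}"
      using span_sub[of _ a1 a2 a3 v lam] unfolding Obs_def by blast
    show "{L \<in> carrier_mat 3 3. mtrace (Tmat lam * L) = 0} \<subseteq>
      {L. \<exists>c. L = mat 3 3 (\<lambda>(i,j). \<Sum>g\<in>quaternion_group. c g * Obs g $$ (i,j))}"
      using spanI by blast
  qed
  have C4: "PIC 3 quaternion_group Obs"
    by (rule PIC_from_perp[OF spanI Obc fin])
  have C6: "\<forall>(\<Omega> :: 'a set) Mo. observable 3 \<Omega> Mo \<and> PIC 3 \<Omega> Mo \<longrightarrow> 8 \<le> card \<Omega>"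
    using lower_bound by blast
  show ?thesis using C1 C2 C3 C4 card_Q C6 by blast
qed

end
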